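(* Let $P(z) \in \mathbb{Z}[z]$ have degree at least $2$ with $P(0)=0$, and let $H(n,x,z) = \frac{P(z+nx) - P(z)}{x} \in \mathbb{Z}[n,x,z]$. For $n \in \mathbb{Z}_{\geq 0}$ define maps $\mathbb{Z}^3 \to \mathbb{Z}^3$ by $S_1(n)(x,y,z) = (x, y + H(n,x,z), z + nx)$ and $S_2(n)(x,y,z) = (x + H(n,y,z), y, z + ny)$, and let $\Gamma$ be the semigroup generated by $\{S_1(n), S_2(n) : n \geq 0\}$. Then each $S_i(n)$ preserves $F(x,y,z) = xy - P(z)$, and for every $v_0 = (x_0, y_0, z_0) \in \mathbb{Z}^3$ with $x_0 \neq 0$, the orbit $\Gamma v_0$ is hyperplane-fleeing.
   Context: A set $A \subset \mathbb{R}^d$ is hyperplane-fleeing if $A$ is not contained in any proper affine subspace (translate of a proper linear subspace) of $\mathbb{R}^d$. *)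

theory Defs
  imports "HOL-Analysis.Analysis" "HOL-Computational_Algebra.Polynomial"
begin

text \<open>H(n,x,z) = (P(z+nx) - P(z))/x, computed as the exact quotient in Z[x]
  of the polynomial P(z + n X) - P(z) by X, for fixed integers n, z.\<close>
definition Hpoly :: "int poly \<Rightarrow> int \<Rightarrow> int \<Rightarrow> int \<Rightarrow> int" where
  "Hpoly P n x z = poly ((pcompose P [:z, n:] - [:poly P z:]) div [:0, 1:]) x"

definition S1 :: "int poly \<Rightarrow> nat \<Rightarrow> int \<times> int \<times> int \<Rightarrow> int \<times> int \<times> int" where
  "S1 P n v = (case v of (x, y, z) \<Rightarrow> (x, y + Hpoly P (int n) x z, z + int n * x))"

definition S2 :: "int poly \<Rightarrow> nat \<Rightarrow> int \<times> int \<times> int \<Rightarrow> int \<times> int \<times> int" where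
  "S2 P n v = (case v of (x, y, z) \<Rightarrow> (x + Hpoly P (int n) y z, y, z + int n * y))"

definition Fform :: "int poly \<Rightarrow> int \<times> int \<times> int \<Rightarrow> int" where
  "Fform P v = (case v of (x, y, z) \<Rightarrow> x * y - poly P z)"

inductive_set Gamma :: "int poly \<Rightarrow> (int \<times> int \<times> int \<Rightarrow> int \<times> int \<times> int) set"
  for P :: "int poly" where
  gen1: "S1 P n \<in> Gamma P"
| gen2: "S2 P n \<in> Gamma P"
| comp: "f \<in> Gamma P \<Longrightarrow> g \<in> Gamma P \<Longrightarrow> f \<circ> g \<in> Gamma P"

definition orbit :: "int poly \<Rightarrow> int \<times> int \<times> int \<Rightarrow> (int \<times> int \<times> int) set" where
  "orbit P v0 = (\<lambda>g. g v0) ` Gamma P"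

definition to_R3 :: "int \<times> int \<times> int \<Rightarrow> real ^ 3" where
  "to_R3 v = (case v of (x, y, z) \<Rightarrow> vector [real_of_int x, real_of_int y, real_of_int z])"

definition hyperplane_fleeing :: "('a::real_vector) set \<Rightarrow> bool" where
  "hyperplane_fleeing A \<longleftrightarrow>
     \<not> (\<exists>a L. subspace L \<and> L \<noteq> UNIV \<and> A \<subseteq> (\<lambda>x. a + x) ` L)"

end

theory Submission
  imports Defs
begin

lemma Hpoly_mult:
  fixes P :: "int poly"
  shows "x * Hpoly P n x z = poly P (z + n * x) - poly P z"
proof -
  define Q where "Q = pcompose P [:z, n:] - [:poly P z:]"
  have "poly Q 0 = 0" by (simp add: Q_def poly_pcompose)
  then have "[:0, 1:] dvd Q" using poly_eq_0_iff_dvd[of Q 0] by simp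
  then have "[:0, 1:] * (Q div [:0, 1:]) = Q" by (rule dvd_mult_div_cancel)
  then have "poly ([:0, 1:] * (Q div [:0, 1:])) x = poly Q x" by simp
  then show ?thesis
    by (simp add: Hpoly_def Q_def poly_pcompose algebra_simps)
qed

lemma poly_of_int_map:
  fixes p :: "int poly"
  shows "poly (map_poly (of_int :: int \<Rightarrow> real) p) (of_int x) = of_int (poly p x)"
  by (simp add: poly_altdef degree_map_poly coeff_map_poly)

lemma key_poly:
  fixes P :: "int poly" and c d :: real
  assumes deg: "degree P \<ge> 2" and a: "a \<noteq> 0"
    and h: "\<And>n::nat. c * real_of_int (poly P (b + int n * a) - poly P b) + d * real n = 0"
  shows "c = 0 \<and> d = 0"
proof -
  define Pr where "Pr = map_poly (of_int :: int \<Rightarrow> real) P"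
  define q where "q = smult c (pcompose Pr [:of_int b, of_int a:] - [:poly Pr (of_int b):]) + [:0, d:]"
  have degPr: "degree Pr = degree P" unfolding Pr_def by (rule degree_map_poly) simp
  have roots: "poly q (real n) = 0" for n
  proof -
    have "poly q (real n) = c * (poly Pr (of_int (b + int n * a)) - poly Pr (of_int b)) + d * real n"
      by (simp add: q_def poly_pcompose algebra_simps)
    also have "\<dots> = 0" unfolding Pr_def poly_of_int_map using h[of n] by simp
    finally show ?thesis .
  qed
  have c0: "c = 0"
  proof (rule ccontr)
    assume c: "c \<noteq> 0"
    have d1: "degree (pcompose Pr [:of_int b, of_int a:]) = degree P"
      using a by (simp add: degree_pcompose degPr)
    have d2: "degree (pcompose Pr [:of_int b, of_int a:] - [:poly Pr (of_int b):]) = degree P"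
      using d1 deg unfolding diff_conv_add_uminus by (subst degree_add_eq_left) auto
    have "degree q = degree P"
      unfolding q_def using d2 c deg
      by (subst degree_add_eq_left) (auto simp: degree_pCons_eq_if)
    then have "q \<noteq> 0" using deg by auto
    then have fin: "finite {x. poly q x = 0}" by (rule poly_roots_finite)
    have "range real \<subseteq> {x. poly q x = 0}" using roots by auto
    then have "finite (range real)" using fin finite_subset by blast
    moreover have "inj real" by (simp add: inj_on_def)
    ultimately show False using finite_imageD infinite_UNIV_nat by blast
  qed
  moreover have "d = 0" using h[of 1] c0 by simp
  ultimately show ?thesis by simp
qed

lemma inner_to_R3: "c \<bullet> to_R3 (x, y, z) = c$1 * real_of_int x + c$2 * real_of_int y + c$3 * real_of_int z"
  by (simp add: to_R3_def inner_vec_def sum_3)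

theorem mainTheorem4:
  fixes P :: "int poly"
  assumes "degree P \<ge> 2" and "poly P 0 = 0"
  shows "(\<forall>n v. Fform P (S1 P n v) = Fform P v \<and> Fform P (S2 P n v) = Fform P v)
       \<and> (\<forall>x0 y0 z0. x0 \<noteq> 0 \<longrightarrow> hyperplane_fleeing (to_R3 ` orbit P (x0, y0, z0)))"
proof (intro conjI allI impI)
  fix n v
  obtain x y z :: int where v: "v = (x, y, z)" by (cases v) auto
  have h1: "x * Hpoly P (int n) x z = poly P (z + int n * x) - poly P z" by (rule Hpoly_mult)
  have h2: "y * Hpoly P (int n) y z = poly P (z + int n * y) - poly P z" by (rule Hpoly_mult)
  show "Fform P (S1 P n v) = Fform P v"
    using h1 by (simp add: v S1_def Fform_def algebra_simps)
  show "Fform P (S2 P n v) = Fform P v"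
    using h2 by (simp add: v S2_def Fform_def algebra_simps)
next
  fix x0 y0 z0 :: int
  assume x0: "x0 \<noteq> 0"
  define v0 where "v0 = (x0, y0, z0)"
  show "hyperplane_fleeing (to_R3 ` orbit P (x0, y0, z0))"
    unfolding hyperplane_fleeing_def
  proof
    assume "\<exists>a L. subspace L \<and> L \<noteq> UNIV \<and> to_R3 ` orbit P (x0, y0, z0) \<subseteq> (\<lambda>x. a + x) ` L"
    then obtain a L where L: "subspace L" "L \<noteq> UNIV"
      and sub: "to_R3 ` orbit P (x0, y0, z0) \<subseteq> (\<lambda>x. a + x) ` L" by blast
    have spL: "span L \<subset> span (UNIV :: (real^3) set)" proof -
      have "span L = L" using L(1) by (simp add: span_eq_iff)
      moreover have "L \<subset> UNIV" using L(2) by auto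
      ultimately show ?thesis by (metis span_UNIV)
    qed
    obtain c :: "real^3" where c: "c \<noteq> 0" "\<And>y. y \<in> span L \<Longrightarrow> orthogonal c y"
      using orthogonal_to_subspace_exists_gen[OF spL] by metis
    have const: "c \<bullet> to_R3 p = c \<bullet> a" if "p \<in> orbit P (x0, y0, z0)" for p
    proof -
      have "to_R3 p \<in> (\<lambda>x. a + x) ` L" using subsetD[OF sub imageI[OF that]] .
      then obtain l where l: "l \<in> L" "to_R3 p = a + l" by (rule imageE) simp
      have "orthogonal c l" using c(2) l(1) by (simp add: span_base)
      then show ?thesis using l by (simp add: inner_add_right orthogonal_def)
    qed
    define f where "f = (\<lambda>(x::int,y::int,z::int). c$1 * real_of_int x + c$2 * real_of_int y + c$3 * real_of_int z)"
    have fc: "f p = c \<bullet> a" if "p \<in> orbit P (x0, y0, z0)" for p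
      using const[OF that] by (cases p) (simp add: f_def inner_to_R3)
    have o1: "S1 P n (x0, y0, z0) \<in> orbit P (x0, y0, z0)" for n
      unfolding orbit_def by (rule image_eqI[of _ _ "S1 P n"]) (auto intro: Gamma.gen1)
    have o2: "S2 P m (S1 P n (x0, y0, z0)) \<in> orbit P (x0, y0, z0)" for m n
      unfolding orbit_def
      by (rule image_eqI[of _ _ "S2 P m \<circ> S1 P n"]) (auto intro: Gamma.gen1 Gamma.gen2 Gamma.comp)
    define Hn where "Hn = (\<lambda>n::nat. Hpoly P (int n) x0 z0)"
    have Hm: "x0 * Hn n = poly P (z0 + int n * x0) - poly P z0" for n
      unfolding Hn_def by (rule Hpoly_mult)
    have H0: "Hn 0 = 0" using Hm[of 0] x0 by simp
    have fn: "f (S1 P n (x0, y0, z0)) = c$1 * x0 + c$2 * (y0 + Hn n) + c$3 * (z0 + int n * x0)" for n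
      by (simp add: f_def S1_def Hn_def)
    have eqn: "c$2 * Hn n + c$3 * (int n * x0) = 0" for n
      using fc[OF o1[of n]] fc[OF o1[of 0]] fn[of n] fn[of 0] H0 by (simp add: algebra_simps)
    have "c$2 * real_of_int (poly P (z0 + int n * x0) - poly P z0) + (c$3 * x0^2) * real n = 0" for n
    proof -
      have "x0 * (c$2 * Hn n + c$3 * (int n * x0)) = 0" using eqn[of n] by simp
      then have "c$2 * (x0 * Hn n) + (c$3 * x0^2) * real n = 0"
        by (simp add: algebra_simps power2_eq_square)
      then show ?thesis by (simp flip: Hm)
    qed
    from key_poly[OF assms(1) x0 this] x0 have c23: "c$2 = 0" "c$3 = 0" by auto
    have "\<exists>n. y0 + Hn n \<noteq> 0"
    proof (rule ccontr)
      assume "\<not> ?thesis"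
      then have all: "y0 + Hn n = 0" for n by auto
      have "y0 = 0" using all[of 0] H0 by simp
      then have "1 * real_of_int (poly P (z0 + int n * x0) - poly P z0) + 0 * real n = 0" for n
        using all[of n] Hm[of n] by simp
      from key_poly[OF assms(1) x0 this] show False by simp
    qed
    then obtain n where yn: "y0 + Hn n \<noteq> 0" by blast
    define y where "y = y0 + Hn n"
    define z where "z = z0 + int n * x0"
    have Hy: "y * Hpoly P (int m) y z = poly P (z + int m * y) - poly P z" for m
      by (rule Hpoly_mult)
    have "\<exists>m. Hpoly P (int m) y z \<noteq> 0"
    proof (rule ccontr)
      assume "\<not> ?thesis"
      then have "1 * real_of_int (poly P (z + int m * y) - poly P z) + 0 * real m = 0" for m
        using Hy[of m] by simp
      from key_poly[OF assms(1) _ this] yn show False by (simp add: y_def)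
    qed
    then obtain m where hm: "Hpoly P (int m) y z \<noteq> 0" by blast
    have S1eq: "S1 P n (x0, y0, z0) = (x0, y, z)" by (simp add: S1_def y_def z_def Hn_def)
    have "f (S2 P m (S1 P n (x0, y0, z0))) = c$1 * (x0 + Hpoly P (int m) y z)"
      by (simp add: S1eq S2_def f_def c23)
    moreover have "f (S1 P n (x0, y0, z0)) = c$1 * x0" by (simp add: S1eq f_def c23)
    ultimately have "c$1 * Hpoly P (int m) y z = 0"
      using fc[OF o1[of n]] fc[OF o2[of m n]] by (simp add: algebra_simps)
    with hm have "c$1 = 0" by simp
    with c23 have "c = 0" by (simp add: vec_eq_iff forall_3)
    with c(1) show False by simp
  qed
qed

end
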